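(* Let $G$ be a $k$-connected cograph on $n$ vertices with cotree $T$, let $w_1,\ldots,w_t$ be the children of the root of $T$, and let $G_i$ be the subgraph induced by the leaves of the subtree rooted at $w_i$. For every $i$ with $|V(G_i)|=n-k$, let $x_i\in V(G_i)$ be a vertex minimizing $|\overline{N}_G(x_i)|$. Then every set $E_{ca}\subseteq E(\overline{G})$ such that $G\cup E_{ca}$ is a $(k+1)$-connected cograph satisfies $|E_{ca}|\geq \sum_{i:\,|V(G_i)|=n-k}|\overline{N}_G(x_i)|$.
   Context: A cograph is a graph that can be built from single vertices by repeatedly taking disjoint unions (label 0) and joins (label 1); equivalently a graph with no induced path on four vertices. The cotree of a cograph is the unique rooted tree whose leaves are the vertices, internal nodes labelled 0/1 with at least two children and labels alternating along root-to-leaf paths, two vertices being adjacent iff their lowest common ancestor is labelled 1; for connected cographs the root is labelled 1. $\overline{G}$ is the complement of $G$, $\overline{N}_G(v)=\{u:\{u,v\}\in E(\overline{G})\}$, and $G\cup F$ is the graph $(V(G),E(G)\cup F)$. A vertex separator of a connected graph is a set whose removal disconnects it; minimal if no proper subset is a vertex separator; a minimum vertex separator is a minimal one of least size. The paper calls a graph $k$-connected if there exists a minimum vertex separator of size $k$. *)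

theory Defs
  imports Main
begin

definition simple_graph :: "'a set \<Rightarrow> 'a set set \<Rightarrow> bool" where
  "simple_graph V E \<longleftrightarrow> finite V \<and>
     (\<forall>e\<in>E. \<exists>u v. e = {u, v} \<and> u \<noteq> v \<and> u \<in> V \<and> v \<in> V)"

definition induced_edges :: "'a set set \<Rightarrow> 'a set \<Rightarrow> 'a set set" where
  "induced_edges E W = {e \<in> E. e \<subseteq> W}"

definition connected_graph :: "'a set \<Rightarrow> 'a set set \<Rightarrow> bool" where
  "connected_graph V E \<longleftrightarrow>
     (\<forall>u\<in>V. \<forall>v\<in>V. (\<lambda>x y. x \<in> V \<and> y \<in> V \<and> {x, y} \<in> E)\<^sup>*\<^sup>* u v)"

definition compl_edges :: "'a set \<Rightarrow> 'a set set \<Rightarrow> 'a set set" where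
  "compl_edges V E = {{u, v} | u v. u \<in> V \<and> v \<in> V \<and> u \<noteq> v \<and> {u, v} \<notin> E}"

definition co_nbrs :: "'a set \<Rightarrow> 'a set set \<Rightarrow> 'a \<Rightarrow> 'a set" where
  "co_nbrs V E v = {u \<in> V. u \<noteq> v \<and> {u, v} \<notin> E}"

definition vertex_separator :: "'a set \<Rightarrow> 'a set set \<Rightarrow> 'a set \<Rightarrow> bool" where
  "vertex_separator V E S \<longleftrightarrow> connected_graph V E \<and> S \<subseteq> V \<and>
     \<not> connected_graph (V - S) (induced_edges E (V - S))"

definition minimal_vertex_separator :: "'a set \<Rightarrow> 'a set set \<Rightarrow> 'a set \<Rightarrow> bool" where
  "minimal_vertex_separator V E S \<longleftrightarrow> vertex_separator V E S \<and>
     (\<forall>S'. S' \<subset> S \<longrightarrow> \<not> vertex_separator V E S')"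

definition minimum_vertex_separator :: "'a set \<Rightarrow> 'a set set \<Rightarrow> 'a set \<Rightarrow> bool" where
  "minimum_vertex_separator V E S \<longleftrightarrow> minimal_vertex_separator V E S \<and>
     (\<forall>S'. minimal_vertex_separator V E S' \<longrightarrow> card S \<le> card S')"

text \<open>The paper's notion: k-connected iff some minimum vertex separator has size k.\<close>
definition k_connected :: "'a set \<Rightarrow> 'a set set \<Rightarrow> nat \<Rightarrow> bool" where
  "k_connected V E k \<longleftrightarrow> (\<exists>S. minimum_vertex_separator V E S \<and> card S = k)"

inductive cograph :: "'a set \<Rightarrow> 'a set set \<Rightarrow> bool" where
  single: "cograph {v} {}"
| union: "\<lbrakk>cograph V1 E1; cograph V2 E2; V1 \<inter> V2 = {}\<rbrakk>
          \<Longrightarrow> cograph (V1 \<union> V2) (E1 \<union> E2)"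
| join: "\<lbrakk>cograph V1 E1; cograph V2 E2; V1 \<inter> V2 = {}\<rbrakk>
          \<Longrightarrow> cograph (V1 \<union> V2) (E1 \<union> E2 \<union> {{u, v} | u v. u \<in> V1 \<and> v \<in> V2})"

text \<open>Cotrees: leaves are vertices, internal nodes carry a label (True = 1 = join,
  False = 0 = union) and a list of children.\<close>
datatype 'a cotree = Leaf 'a | Node bool "'a cotree list"

fun ct_leaves :: "'a cotree \<Rightarrow> 'a set" where
  "ct_leaves (Leaf v) = {v}"
| "ct_leaves (Node b ts) = \<Union> (set (map ct_leaves ts))"

fun ct_label_differs :: "bool \<Rightarrow> 'a cotree \<Rightarrow> bool" where
  "ct_label_differs b (Leaf v) = True"
| "ct_label_differs b (Node c ts) = (c \<noteq> b)"

fun ct_wf :: "'a cotree \<Rightarrow> bool" where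
  "ct_wf (Leaf v) = True"
| "ct_wf (Node b ts) = (length ts \<ge> 2 \<and> (\<forall>t\<in>set ts. ct_wf t \<and> ct_label_differs b t) \<and>
      (\<forall>i<length ts. \<forall>j<length ts. i \<noteq> j \<longrightarrow> ct_leaves (ts!i) \<inter> ct_leaves (ts!j) = {}))"

text \<open>Edges determined by the cotree: u v adjacent iff their lowest common ancestor
  is labelled 1, i.e. they lie in different children of a node labelled True.\<close>
fun ct_edges :: "'a cotree \<Rightarrow> 'a set set" where
  "ct_edges (Leaf v) = {}"
| "ct_edges (Node b ts) = \<Union> (set (map ct_edges ts)) \<union>
      (if b then {{u, v} | u v i j. i < length ts \<and> j < length ts \<and> i \<noteq> j \<and>
                   u \<in> ct_leaves (ts!i) \<and> v \<in> ct_leaves (ts!j)} else {})"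

definition is_cotree :: "'a set \<Rightarrow> 'a set set \<Rightarrow> 'a cotree \<Rightarrow> bool" where
  "is_cotree V E T \<longleftrightarrow> ct_wf T \<and> ct_leaves T = V \<and> ct_edges T = E"

end

theory Submission
  imports Defs
begin
lemma not_conn:
  assumes "connected_graph W E'" "u \<in> P" "P \<subseteq> W" "v \<in> W" "v \<notin> P"
    "\<forall>x y. x \<in> P \<longrightarrow> y \<in> W \<longrightarrow> {x,y} \<in> E' \<longrightarrow> y \<in> P"
  shows False
proof -
  have "(\<lambda>x y. x \<in> W \<and> y \<in> W \<and> {x,y} \<in> E')\<^sup>*\<^sup>* u v"
    using assms(1-4) unfolding connected_graph_def by blast
  then have "v \<in> P" using assms(2,6) by (induction rule: rtranclp_induct) auto
  with assms(5) show False by simp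
qed

lemma cograph_edges: "cograph V E \<Longrightarrow> e \<in> E \<Longrightarrow> e \<subseteq> V \<and> (\<exists>u v. e = {u,v} \<and> u \<noteq> v)"
  by (induction rule: cograph.induct) blast+

lemma cograph_split:
  assumes "cograph V E"
  shows "W \<subseteq> V \<Longrightarrow> 2 \<le> card W \<Longrightarrow> connected_graph W (induced_edges E W) \<Longrightarrow>
    \<exists>A B. A \<union> B = W \<and> A \<inter> B = {} \<and> A \<noteq> {} \<and> B \<noteq> {} \<and> (\<forall>a\<in>A. \<forall>b\<in>B. {a,b} \<in> E)"
  using assms
proof (induction arbitrary: W rule: cograph.induct)
  case (single v)
  then have "card W \<le> card {v}" by (intro card_mono) auto
  then show ?case using single by simp
next
  case (union V1 E1 V2 E2)
  have n1: "\<forall>e\<in>E1. \<not> e \<subseteq> W" if "W \<subseteq> V2"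
    using cograph_edges[OF union.hyps(1)] union.hyps(3) that by fastforce
  have n2: "\<forall>e\<in>E2. \<not> e \<subseteq> W" if "W \<subseteq> V1"
    using cograph_edges[OF union.hyps(2)] union.hyps(3) that by fastforce
  have "W \<subseteq> V1 \<or> W \<subseteq> V2 \<or> (W \<inter> V1 \<noteq> {} \<and> W \<inter> V2 \<noteq> {})" using union.prems(1) by blast
  moreover {
    assume W: "W \<subseteq> V1"
    have eq: "induced_edges (E1 \<union> E2) W = induced_edges E1 W"
      using n2[OF W] unfolding induced_edges_def by auto
    have "connected_graph W (induced_edges E1 W)" using union.prems(3) unfolding eq .
    then obtain A B where "A \<union> B = W \<and> A \<inter> B = {} \<and> A \<noteq> {} \<and> B \<noteq> {} \<and> (\<forall>a\<in>A. \<forall>b\<in>B. {a,b} \<in> E1)"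
      using union.IH(1)[OF W union.prems(2)] by blast
    then have ?case by (intro exI[of _ A] exI[of _ B]) auto
  } moreover {
    assume W: "W \<subseteq> V2"
    have eq: "induced_edges (E1 \<union> E2) W = induced_edges E2 W"
      using n1[OF W] unfolding induced_edges_def by auto
    have "connected_graph W (induced_edges E2 W)" using union.prems(3) unfolding eq .
    then obtain A B where "A \<union> B = W \<and> A \<inter> B = {} \<and> A \<noteq> {} \<and> B \<noteq> {} \<and> (\<forall>a\<in>A. \<forall>b\<in>B. {a,b} \<in> E2)"
      using union.IH(2)[OF W union.prems(2)] by blast
    then have ?case by (intro exI[of _ A] exI[of _ B]) auto
  } moreover {
    assume W: "W \<inter> V1 \<noteq> {} \<and> W \<inter> V2 \<noteq> {}"
    then obtain u v where uv: "u \<in> W \<inter> V1" "v \<in> W \<inter> V2" by blast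
    have "False"
    proof (rule not_conn[OF union.prems(3) uv(1)])
      show "W \<inter> V1 \<subseteq> W" by blast
      show "v \<in> W" "v \<notin> W \<inter> V1" using uv union.hyps(3) by auto
      show "\<forall>x y. x \<in> W \<inter> V1 \<longrightarrow> y \<in> W \<longrightarrow> {x, y} \<in> induced_edges (E1 \<union> E2) W \<longrightarrow> y \<in> W \<inter> V1"
        using cograph_edges[OF union.hyps(1)] cograph_edges[OF union.hyps(2)] union.hyps(3)
        unfolding induced_edges_def by blast
    qed
    then have ?case ..
  }
  ultimately show ?case by blast
next
  case (join V1 E1 V2 E2)
  have n1: "\<forall>e\<in>E1. \<not> e \<subseteq> W" if "W \<subseteq> V2"
    using cograph_edges[OF join.hyps(1)] join.hyps(3) that by fastforce
  have n2: "\<forall>e\<in>E2. \<not> e \<subseteq> W" if "W \<subseteq> V1"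
    using cograph_edges[OF join.hyps(2)] join.hyps(3) that by fastforce
  have "W \<subseteq> V1 \<or> W \<subseteq> V2 \<or> (W \<inter> V1 \<noteq> {} \<and> W \<inter> V2 \<noteq> {})" using join.prems(1) by blast
  moreover {
    assume W: "W \<subseteq> V1"
    have eq: "induced_edges (E1 \<union> E2 \<union> {{u, v} |u v. u \<in> V1 \<and> v \<in> V2}) W = induced_edges E1 W"
      using n2[OF W] W join.hyps(3) unfolding induced_edges_def by auto
    have "connected_graph W (induced_edges E1 W)" using join.prems(3) unfolding eq .
    then obtain A B where "A \<union> B = W \<and> A \<inter> B = {} \<and> A \<noteq> {} \<and> B \<noteq> {} \<and> (\<forall>a\<in>A. \<forall>b\<in>B. {a,b} \<in> E1)"
      using join.IH(1)[OF W join.prems(2)] by blast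
    then have ?case by (intro exI[of _ A] exI[of _ B]) auto
  } moreover {
    assume W: "W \<subseteq> V2"
    have eq: "induced_edges (E1 \<union> E2 \<union> {{u, v} |u v. u \<in> V1 \<and> v \<in> V2}) W = induced_edges E2 W"
      using n1[OF W] W join.hyps(3) unfolding induced_edges_def by auto
    have "connected_graph W (induced_edges E2 W)" using join.prems(3) unfolding eq .
    then obtain A B where "A \<union> B = W \<and> A \<inter> B = {} \<and> A \<noteq> {} \<and> B \<noteq> {} \<and> (\<forall>a\<in>A. \<forall>b\<in>B. {a,b} \<in> E2)"
      using join.IH(2)[OF W join.prems(2)] by blast
    then have ?case by (intro exI[of _ A] exI[of _ B]) auto
  } moreover {
    assume W: "W \<inter> V1 \<noteq> {} \<and> W \<inter> V2 \<noteq> {}"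
    have c1: "(W \<inter> V1) \<union> (W \<inter> V2) = W" using join.prems(1) by blast
    have c2: "(W \<inter> V1) \<inter> (W \<inter> V2) = {}" using join.hyps(3) by blast
    have c3: "\<forall>a\<in>W \<inter> V1. \<forall>b\<in>W \<inter> V2. {a,b} \<in> E1 \<union> E2 \<union> {{u, v} |u v. u \<in> V1 \<and> v \<in> V2}"
      by auto
    have ?case
      apply (rule exI[of _ "W \<inter> V1"])
      apply (rule exI[of _ "W \<inter> V2"])
      using c1 c2 c3 W by simp
  }
  ultimately show ?case by blast
qed

lemma count_core:
  assumes "finite W" "X \<union> Y = W" "X \<inter> Y = {}" "w \<in> X"
   "\<forall>u\<in>X. f u \<in> Y \<and> {u, f u} \<notin> E"
   "\<forall>a\<in>X. \<forall>b\<in>Y. {a,b} \<in> E \<union> F"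
  shows "card {u\<in>W. u \<noteq> w \<and> {u,w} \<notin> E} \<le> card {e\<in>F. e \<subseteq> W}"
proof -
  define g where "g u = (if u \<in> Y then {u,w} else {u, f u})" for u
  have inj: "inj_on g {u\<in>W. u \<noteq> w \<and> {u,w} \<notin> E}"
  proof (rule inj_onI)
    fix u1 u2 assume u1: "u1 \<in> {u\<in>W. u \<noteq> w \<and> {u,w} \<notin> E}" and u2: "u2 \<in> {u\<in>W. u \<noteq> w \<and> {u,w} \<notin> E}"
      and eq: "g u1 = g u2"
    show "u1 = u2"
    proof (cases "u1 \<in> Y")
      case True
      show ?thesis
      proof (cases "u2 \<in> Y")
        case True
        then show ?thesis using eq \<open>u1 \<in> Y\<close> u1 u2 unfolding g_def by (auto simp: doubleton_eq_iff)
      next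
        case False
        then have "u2 \<in> X" using u2 assms(2) by auto
        then show ?thesis using eq \<open>u1 \<in> Y\<close> False u1 u2 assms(3,4,5) unfolding g_def
          by (auto simp: doubleton_eq_iff)
      qed
    next
      case False
      then have x1: "u1 \<in> X" using u1 assms(2) by auto
      show ?thesis
      proof (cases "u2 \<in> Y")
        case True
        then show ?thesis using eq x1 False u1 u2 assms(3,4,5) unfolding g_def
          by (auto simp: doubleton_eq_iff)
      next
        case F2: False
        then have "u2 \<in> X" using u2 assms(2) by auto
        then show ?thesis using eq x1 False F2 u1 u2 assms(3,4,5) unfolding g_def
          by (auto simp: doubleton_eq_iff)
      qed
    qed
  qed
  have sub: "g ` {u\<in>W. u \<noteq> w \<and> {u,w} \<notin> E} \<subseteq> {e\<in>F. e \<subseteq> W}"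
  proof
    fix e assume "e \<in> g ` {u\<in>W. u \<noteq> w \<and> {u,w} \<notin> E}"
    then obtain u where u: "u \<in> W" "u \<noteq> w" "{u,w} \<notin> E" and e: "e = g u" by blast
    show "e \<in> {e\<in>F. e \<subseteq> W}"
    proof (cases "u \<in> Y")
      case True
      then have "{w,u} \<in> E \<union> F" using assms(4,6) by blast
      then show ?thesis using True u e assms(2,4) unfolding g_def by (auto simp: insert_commute)
    next
      case False
      then have "u \<in> X" using u assms(2) by auto
      then show ?thesis using False u e assms(2,5,6) unfolding g_def by auto
    qed
  qed
  have "finite {e\<in>F. e \<subseteq> W}"
    by (rule finite_subset[of _ "Pow W"]) (use assms(1) in auto)
  then show ?thesis using card_inj_on_le[OF inj sub] by simp
qed

lemma count_main:
  assumes "finite W" "A \<union> B = W" "A \<inter> B = {}" "A \<noteq> {}" "B \<noteq> {}"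
   "\<forall>u\<in>W. u \<in> P u \<and> P u \<subseteq> W \<and> P u \<noteq> W" "\<forall>u\<in>W. \<forall>v\<in>P u. P v = P u"
   "\<forall>u\<in>W. \<forall>v\<in>W. v \<notin> P u \<longrightarrow> {u,v} \<notin> E"
   "\<forall>a\<in>A. \<forall>b\<in>B. {a,b} \<in> E \<union> F"
  shows "\<exists>w\<in>W. card {u\<in>W. u\<noteq>w \<and> {u,w}\<notin>E} \<le> card {e\<in>F. e \<subseteq> W}"
proof (cases "\<exists>z\<in>B. B \<subseteq> P z")
  case True
  then obtain z where z: "z \<in> B" "B \<subseteq> P z" by blast
  have "\<exists>v\<in>A. v \<notin> P z"
  proof (rule ccontr)
    assume "\<not> ?thesis"
    then have "W \<subseteq> P z" using z assms(2) by auto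
    then show False using assms(6) z assms(2) by blast
  qed
  then obtain v0 where v0: "v0 \<in> A" "v0 \<notin> P z" by blast
  have "\<forall>u\<in>B. (\<lambda>_. v0) u \<in> A \<and> {u, (\<lambda>_. v0) u} \<notin> E"
  proof
    fix u assume u: "u \<in> B"
    have "P u = P z" using assms(7) z u assms(2) by blast
    then show "(\<lambda>_. v0) u \<in> A \<and> {u, (\<lambda>_. v0) u} \<notin> E"
      using assms(8) v0 u assms(2) by auto
  qed
  moreover have "\<forall>a\<in>B. \<forall>b\<in>A. {a,b} \<in> E \<union> F"
  proof (intro ballI)
    fix a b assume "a \<in> B" "b \<in> A"
    then have "{b,a} \<in> E \<union> F" using assms(9) by blast
    then show "{a,b} \<in> E \<union> F" by (simp add: insert_commute)
  qed
  ultimately have "card {u\<in>W. u\<noteq>z \<and> {u,z}\<notin>E} \<le> card {e\<in>F. e \<subseteq> W}"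
    using count_core[of W B A z "\<lambda>_. v0" E F] assms(1,2,3) z(1) by (auto simp: Un_commute Int_commute)
  then show ?thesis using z assms(2) by blast
next
  case False
  have ex: "\<exists>v\<in>B. v \<notin> P u" if u: "u \<in> A" for u
  proof (rule ccontr)
    assume "\<not> ?thesis"
    then have BP: "B \<subseteq> P u" by blast
    obtain z where z: "z \<in> B" using assms(5) by blast
    have "P z = P u" using assms(7) u assms(2) BP z by blast
    then show False using False BP z by auto
  qed
  define f where "f u = (SOME v. v \<in> B \<and> v \<notin> P u)" for u
  have "\<forall>u\<in>A. f u \<in> B \<and> {u, f u} \<notin> E"
  proof
    fix u assume u: "u \<in> A"
    have "f u \<in> B \<and> f u \<notin> P u" unfolding f_def using someI_ex[OF ex[OF u, unfolded Bex_def]] .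
    then show "f u \<in> B \<and> {u, f u} \<notin> E" using assms(8) u assms(2) by auto
  qed
  moreover obtain w where w: "w \<in> A" using assms(4) by blast
  ultimately have "card {u\<in>W. u\<noteq>w \<and> {u,w}\<notin>E} \<le> card {e\<in>F. e \<subseteq> W}"
    using count_core[of W A B w f E F] assms(1,2,3,9) by auto
  then show ?thesis using w assms(2) by blast
qed


lemma ct_edges_sub: "e \<in> ct_edges t \<Longrightarrow> e \<subseteq> ct_leaves t"
proof (induction t arbitrary: e)
  case (Leaf x)
  then show ?case by simp
next
  case (Node b ts)
  show ?case
  proof (cases "e \<in> \<Union> (set (map ct_edges ts))")
    case True
    then obtain t where "t \<in> set ts" "e \<in> ct_edges t" by auto
    then show ?thesis using Node.IH by auto
  next
    case False
    then obtain u v i j where "e = {u,v}" "i < length ts" "j < length ts"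
      "u \<in> ct_leaves (ts!i)" "v \<in> ct_leaves (ts!j)"
      using Node.prems by (auto split: if_splits)
    moreover have "ts!i \<in> set ts" "ts!j \<in> set ts" using \<open>i < length ts\<close> \<open>j < length ts\<close> by simp_all
    ultimately show ?thesis by auto
  qed
qed

lemma ct_leaves_ne: "ct_wf t \<Longrightarrow> ct_leaves t \<noteq> {}"
proof (induction t)
  case (Leaf x)
  then show ?case by simp
next
  case (Node b ts)
  then have "ts ! 0 \<in> set ts" by (intro nth_mem) auto
  then show ?case using Node by fastforce
qed

lemma minimal_exists:
  assumes "finite V"
  shows "vertex_separator V E S \<Longrightarrow> \<exists>S'\<subseteq>S. minimal_vertex_separator V E S'"
proof (induction "card S" arbitrary: S rule: less_induct)
  case less
  show ?case
  proof (cases "minimal_vertex_separator V E S")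
    case True
    then show ?thesis by blast
  next
    case False
    then obtain S' where S': "S' \<subset> S" "vertex_separator V E S'"
      using less.prems unfolding minimal_vertex_separator_def by blast
    have "finite S" using less.prems assms unfolding vertex_separator_def
      using finite_subset by blast
    then have "card S' < card S" using S'(1) psubset_card_mono by blast
    then show ?thesis using less.hyps S' by (meson order.trans psubset_imp_subset)
  qed
qed

lemma conn_small: "\<not> connected_graph U E' \<Longrightarrow> \<exists>u v. u\<in>U \<and> v\<in>U \<and> u\<noteq>v"
  unfolding connected_graph_def by auto


theorem lemma4:
  fixes V :: "'a set" and E :: "'a set set" and k :: nat and b :: bool
    and ws :: "'a cotree list" and x :: "nat \<Rightarrow> 'a"
  assumes "simple_graph V E"
    and "cograph V E"
    and "k_connected V E k"
    and "is_cotree V E (Node b ws)"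
    and "\<And>i. \<lbrakk>i < length ws; card (ct_leaves (ws!i)) = card V - k\<rbrakk> \<Longrightarrow>
           x i \<in> ct_leaves (ws!i) \<and>
           (\<forall>y\<in>ct_leaves (ws!i). card (co_nbrs V E (x i)) \<le> card (co_nbrs V E y))"
  shows "\<forall>Eca. Eca \<subseteq> compl_edges V E \<and> cograph V (E \<union> Eca) \<and> k_connected V (E \<union> Eca) (k + 1)
           \<longrightarrow> card Eca \<ge> (\<Sum>i\<in>{i. i < length ws \<and> card (ct_leaves (ws!i)) = card V - k}.
                              card (co_nbrs V E (x i)))"
proof (intro allI impI)
  fix Eca assume H: "Eca \<subseteq> compl_edges V E \<and> cograph V (E \<union> Eca) \<and> k_connected V (E \<union> Eca) (k + 1)"
  have finV: "finite V" using assms(1) unfolding simple_graph_def by blast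
  have wf: "ct_wf (Node b ws)" and leavesV: "ct_leaves (Node b ws) = V"
    and edgesE: "ct_edges (Node b ws) = E" using assms(4) unfolding is_cotree_def by auto
  have len: "length ws \<ge> 2" and wfc: "\<forall>t\<in>set ws. ct_wf t \<and> ct_label_differs b t"
    and disj: "\<forall>i<length ws. \<forall>j<length ws. i \<noteq> j \<longrightarrow> ct_leaves (ws!i) \<inter> ct_leaves (ws!j) = {}"
    using wf by auto
  have uniq: "\<And>i j u. i < length ws \<Longrightarrow> j < length ws \<Longrightarrow> u \<in> ct_leaves (ws!i) \<Longrightarrow>
      u \<in> ct_leaves (ws!j) \<Longrightarrow> i = j"
    using disj by blast
  have WsV: "\<And>i. i < length ws \<Longrightarrow> ct_leaves (ws!i) \<subseteq> V"
    using leavesV by (auto dest: nth_mem)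
  have inV: "\<And>u. u \<in> V \<Longrightarrow> \<exists>p<length ws. u \<in> ct_leaves (ws!p)"
    using leavesV by (auto simp: in_set_conv_nth)
  have ne: "\<And>i. i < length ws \<Longrightarrow> ct_leaves (ws!i) \<noteq> {}"
    using wfc ct_leaves_ne by (auto dest: nth_mem)
  obtain S where S: "minimum_vertex_separator V E S" "card S = k"
    using assms(3) unfolding k_connected_def by blast
  have Ssep: "vertex_separator V E S" using S(1)
    unfolding minimum_vertex_separator_def minimal_vertex_separator_def by blast
  have connE: "connected_graph V E" using Ssep unfolding vertex_separator_def by blast
  have k2: "k + 2 \<le> card V"
  proof -
    have "\<not> connected_graph (V - S) (induced_edges E (V - S))" "S \<subseteq> V"
      using Ssep unfolding vertex_separator_def by blast+
    then obtain u v where "u \<in> V - S" "v \<in> V - S" "u \<noteq> v" using conn_small by metis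
    then have "card {u,v} \<le> card (V - S)" using finV by (intro card_mono) auto
    then have "2 \<le> card (V - S)" using \<open>u \<noteq> v\<close> by simp
    moreover have "card (V - S) = card V - card S"
      using \<open>S \<subseteq> V\<close> finV by (meson card_Diff_subset finite_subset)
    moreover have "card S \<le> card V" using \<open>S \<subseteq> V\<close> finV by (simp add: card_mono)
    ultimately show ?thesis using S(2) by linarith
  qed
  have bT: "b = True"
  proof (rule ccontr)
    assume "b \<noteq> True"
    then have Eb: "E = \<Union> (set (map ct_edges ws))" using edgesE by simp
    obtain u where u: "u \<in> ct_leaves (ws!0)" using ne len by fastforce
    obtain v where v: "v \<in> ct_leaves (ws!1)" using ne len by fastforce
    have l01: "0 < length ws" "1 < length ws" using len by auto
    have vn: "v \<notin> ct_leaves (ws!0)" using uniq[of 1 0 v, OF l01(2) l01(1) v] by auto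
    show False
    proof (rule not_conn[OF connE u])
      show "ct_leaves (ws!0) \<subseteq> V" using WsV l01 by simp
      show "v \<in> V" "v \<notin> ct_leaves (ws!0)" using WsV[of 1] l01 v vn by auto
      show "\<forall>x y. x \<in> ct_leaves (ws ! 0) \<longrightarrow> y \<in> V \<longrightarrow> {x, y} \<in> E \<longrightarrow> y \<in> ct_leaves (ws ! 0)"
      proof (intro allI impI)
        fix x y assume xy: "x \<in> ct_leaves (ws ! 0)" "y \<in> V" "{x, y} \<in> E"
        then obtain p where p: "p < length ws" "{x,y} \<in> ct_edges (ws!p)"
          using Eb by (auto simp: in_set_conv_nth)
        then have "{x,y} \<subseteq> ct_leaves (ws!p)" using ct_edges_sub by blast
        then have "p = 0" using uniq[of p 0 x] p xy l01 by auto
        then show "y \<in> ct_leaves (ws ! 0)" using \<open>{x,y} \<subseteq> ct_leaves (ws!p)\<close> by simp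
      qed
    qed
  qed
  define E' where "E' = E \<union> Eca"
  obtain S' where S': "minimum_vertex_separator V E' S'" "card S' = k + 1"
    using H unfolding k_connected_def E'_def by blast
  have connE': "connected_graph V E'" using S'(1)
    unfolding minimum_vertex_separator_def minimal_vertex_separator_def vertex_separator_def by blast
  have S'min: "\<And>S''. minimal_vertex_separator V E' S'' \<Longrightarrow> k + 1 \<le> card S''"
    using S' unfolding minimum_vertex_separator_def by auto
  have cogE': "cograph V E'" using H unfolding E'_def by blast
  have EcaP: "Eca \<subseteq> Pow V" using H unfolding compl_edges_def by auto
  have finEca: "finite Eca" using EcaP finV by (meson finite_Pow_iff finite_subset)
  have ne_e: "\<And>e. e \<in> Eca \<Longrightarrow> e \<noteq> {}" using H unfolding compl_edges_def by auto
  define I where "I = {i. i < length ws \<and> card (ct_leaves (ws!i)) = card V - k}"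
  define F where "F i = {e \<in> Eca. e \<subseteq> ct_leaves (ws!i)}" for i
  have key: "card (co_nbrs V E (x i)) \<le> card (F i)" if iI: "i \<in> I" for i
  proof -
    define W where "W = ct_leaves (ws!i)"
    have il: "i < length ws" and cW: "card W = card V - k" using iI unfolding I_def W_def by auto
    have WV: "W \<subseteq> V" using WsV il unfolding W_def by blast
    have finW: "finite W" using WV finV finite_subset by blast
    have W2: "2 \<le> card W" using cW k2 by linarith
    have connW: "connected_graph W (induced_edges E' W)"
    proof (rule ccontr)
      assume nc: "\<not> connected_graph W (induced_edges E' W)"
      have "V - (V - W) = W" using WV by blast
      then have sep: "vertex_separator V E' (V - W)"
        unfolding vertex_separator_def using connE' nc by auto
      obtain S'' where S'': "S'' \<subseteq> V - W" "minimal_vertex_separator V E' S''"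
        using minimal_exists[OF finV sep] by blast
      have "card S'' \<le> card (V - W)" using S''(1) finV by (intro card_mono) auto
      also have "card (V - W) = card V - card W" using WV finV by (meson card_Diff_subset finite_subset)
      finally have "card S'' \<le> k" using cW k2 by linarith
      then show False using S'min[OF S''(2)] by linarith
    qed
    obtain A B where AB: "A \<union> B = W" "A \<inter> B = {}" "A \<noteq> {}" "B \<noteq> {}"
      "\<forall>a\<in>A. \<forall>b\<in>B. {a,b} \<in> E'"
      using cograph_split[OF cogE' WV W2 connW] by blast
    have wsi_in: "ws!i \<in> set ws" using il by simp
    obtain c cs where wsi: "ws!i = Node c cs"
    proof (cases "ws!i")
      case (Leaf v)
      then have "W = {v}" unfolding W_def by simp
      then show ?thesis using W2 by simp
    next
      case (Node c cs)
      then show ?thesis using that by blast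
    qed
    have "c = False" using wfc wsi_in wsi bT by fastforce
    have wfi: "ct_wf (Node c cs)" using wfc wsi_in wsi by metis
    then have lencs: "length cs \<ge> 2" and wfcs: "\<forall>t\<in>set cs. ct_wf t"
      and disjcs: "\<forall>i<length cs. \<forall>j<length cs. i \<noteq> j \<longrightarrow> ct_leaves (cs!i) \<inter> ct_leaves (cs!j) = {}"
      by auto
    have Wcs: "W = \<Union> (set (map ct_leaves cs))" unfolding W_def wsi by simp
    have necs: "\<And>j. j < length cs \<Longrightarrow> ct_leaves (cs!j) \<noteq> {}"
      using wfcs ct_leaves_ne by (auto dest: nth_mem)
    have csW: "\<And>j. j < length cs \<Longrightarrow> ct_leaves (cs!j) \<subseteq> W"
      using Wcs by (auto dest: nth_mem)
    define idx where "idx u = (SOME j. j < length cs \<and> u \<in> ct_leaves (cs!j))" for u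
    have idx: "idx u < length cs \<and> u \<in> ct_leaves (cs ! idx u)" if "u \<in> W" for u
    proof -
      have "\<exists>j. j < length cs \<and> u \<in> ct_leaves (cs!j)" using that Wcs by (auto simp: in_set_conv_nth)
      then show ?thesis unfolding idx_def by (rule someI_ex)
    qed
    have idxu: "idx u = j" if "j < length cs" "u \<in> ct_leaves (cs!j)" for u j
    proof -
      have "u \<in> W" using csW that by blast
      then show ?thesis using idx[of u] disjcs that by blast
    qed
    define P where "P u = ct_leaves (cs ! idx u)" for u
    have P1: "\<forall>u\<in>W. u \<in> P u \<and> P u \<subseteq> W \<and> P u \<noteq> W"
    proof
      fix u assume u: "u \<in> W"
      have a: "u \<in> P u" "P u \<subseteq> W" using idx[OF u] csW unfolding P_def by auto
      define j' where "j' = (if idx u = 0 then 1 else (0::nat))"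
      have j': "j' < length cs" "j' \<noteq> idx u" using lencs unfolding j'_def by auto
      obtain z where z: "z \<in> ct_leaves (cs!j')" using necs[OF j'(1)] by blast
      have "z \<notin> P u" using disjcs j' idx[OF u] z unfolding P_def by blast
      moreover have "z \<in> W" using csW[OF j'(1)] z by blast
      ultimately show "u \<in> P u \<and> P u \<subseteq> W \<and> P u \<noteq> W" using a by blast
    qed
    have P2: "\<forall>u\<in>W. \<forall>v\<in>P u. P v = P u"
      using idx idxu unfolding P_def by metis
    have P3: "\<forall>u\<in>W. \<forall>v\<in>W. v \<notin> P u \<longrightarrow> {u,v} \<notin> E"
    proof (intro ballI impI notI)
      fix u v assume u: "u \<in> W" and v: "v \<in> W" and vP: "v \<notin> P u" and e: "{u,v} \<in> E"
      have "{u,v} \<in> \<Union> (set (map ct_edges ws)) \<or>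
            {u,v} \<in> {{u, v} | u v i j. i < length ws \<and> j < length ws \<and> i \<noteq> j \<and>
                   u \<in> ct_leaves (ws!i) \<and> v \<in> ct_leaves (ws!j)}"
        using e edgesE bT by auto
      then show False
      proof
        assume "{u,v} \<in> \<Union> (set (map ct_edges ws))"
        then obtain p where p: "p < length ws" "{u,v} \<in> ct_edges (ws!p)"
          by (auto simp: in_set_conv_nth)
        then have "{u,v} \<subseteq> ct_leaves (ws!p)" using ct_edges_sub by blast
        then have "p = i" using uniq[of p i u] p il u unfolding W_def by auto
        then have "{u,v} \<in> \<Union> (set (map ct_edges cs))" using p wsi \<open>c = False\<close> by simp
        then obtain r where r: "r < length cs" "{u,v} \<in> ct_edges (cs!r)"
          by (auto simp: in_set_conv_nth)
        then have "{u,v} \<subseteq> ct_leaves (cs!r)" using ct_edges_sub by blast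
        then have "idx u = r" "v \<in> ct_leaves (cs!r)" using idxu r by auto
        then show False using vP unfolding P_def by simp
      next
        assume "{u,v} \<in> {{u, v} | u v i j. i < length ws \<and> j < length ws \<and> i \<noteq> j \<and>
                   u \<in> ct_leaves (ws!i) \<and> v \<in> ct_leaves (ws!j)}"
        then obtain u' v' p q where pq: "{u,v} = {u',v'}" "p < length ws" "q < length ws" "p \<noteq> q"
          "u' \<in> ct_leaves (ws!p)" "v' \<in> ct_leaves (ws!q)" by blast
        have "u' \<in> W" "v' \<in> W" using pq(1) u v by (auto simp: doubleton_eq_iff)
        then have "p = i" "q = i" using uniq pq il unfolding W_def by blast+
        then show False using pq(4) by simp
      qed
    qed
    have cross: "\<forall>a\<in>A. \<forall>b\<in>B. {a,b} \<in> E \<union> Eca" using AB(5) unfolding E'_def .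
    obtain w where w: "w \<in> W" "card {u\<in>W. u\<noteq>w \<and> {u,w}\<notin>E} \<le> card {e\<in>Eca. e \<subseteq> W}"
      using count_main[OF finW AB(1-4) P1 P2 P3 cross] by blast
    have cosub: "co_nbrs V E w \<subseteq> {u\<in>W. u\<noteq>w \<and> {u,w}\<notin>E}"
    proof
      fix u assume "u \<in> co_nbrs V E w"
      then have u: "u \<in> V" "u \<noteq> w" "{u,w} \<notin> E" unfolding co_nbrs_def by auto
      have "u \<in> W"
      proof (rule ccontr)
        assume uW: "u \<notin> W"
        obtain p where p: "p < length ws" "u \<in> ct_leaves (ws!p)" using inV[OF u(1)] by blast
        have "p \<noteq> i" using uW p unfolding W_def by auto
        then have "{u,w} \<in> {{u, v} | u v i j. i < length ws \<and> j < length ws \<and> i \<noteq> j \<and>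
                   u \<in> ct_leaves (ws!i) \<and> v \<in> ct_leaves (ws!j)}"
          using p il w(1) unfolding W_def by blast
        then have "{u,w} \<in> E" using edgesE bT by auto
        then show False using u by simp
      qed
      then show "u \<in> {u\<in>W. u\<noteq>w \<and> {u,w}\<notin>E}" using u by simp
    qed
    have "card (co_nbrs V E (x i)) \<le> card (co_nbrs V E w)"
      using assms(5)[OF il] cW w(1) unfolding W_def by blast
    also have "\<dots> \<le> card {u\<in>W. u\<noteq>w \<and> {u,w}\<notin>E}" using cosub finW by (intro card_mono) auto
    also have "\<dots> \<le> card (F i)" using w(2) unfolding F_def W_def .
    finally show ?thesis .
  qed
  have finI: "finite I" unfolding I_def by simp
  have "(\<Sum>i\<in>I. card (co_nbrs V E (x i))) \<le> (\<Sum>i\<in>I. card (F i))"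
    using key by (rule sum_mono)
  also have "\<dots> = card (\<Union>i\<in>I. F i)"
  proof (rule card_UN_disjoint[symmetric])
    show "finite I" by (rule finI)
    show "\<forall>i\<in>I. finite (F i)" using finEca unfolding F_def by auto
    show "\<forall>i\<in>I. \<forall>j\<in>I. i \<noteq> j \<longrightarrow> F i \<inter> F j = {}"
    proof (intro ballI impI)
      fix i j assume ij: "i \<in> I" "j \<in> I" "i \<noteq> j"
      have "ct_leaves (ws!i) \<inter> ct_leaves (ws!j) = {}" using disj ij unfolding I_def by auto
      then show "F i \<inter> F j = {}" using ne_e unfolding F_def by blast
    qed
  qed
  also have "\<dots> \<le> card Eca" using finEca unfolding F_def by (intro card_mono) auto
  finally show "card Eca \<ge> (\<Sum>i\<in>{i. i < length ws \<and> card (ct_leaves (ws!i)) = card V - k}.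
                              card (co_nbrs V E (x i)))" unfolding I_def .
qed
end
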